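(* Let $\mu$ be a positive Radon measure on $\mathbb{R}^d$ satisfying the growth condition with constants $C_0>0$, $n\in(0,d]$, and let $1\le q \le p<\infty$. Then for every $f \in \mathcal{C}^p_q(\mu)$ the limit $M(f):=\lim_{Q \in \mathcal{Q}(\mu,2)}m_Q(f)$ exists; that is, there is a number $M(f)$ such that for every $\varepsilon>0$ there is a doubling cube $Q \in \mathcal{Q}(\mu,2)$ with $|m_R(f)-m_Q(f)| \le \varepsilon$ for all $R \in \mathcal{Q}(\mu,2)$ with $R\supset Q$. In particular, there exists an increasing sequence of concentric doubling cubes $I_0 \subset I_1 \subset \cdots \subset I_k \subset \cdots$ such that $\{m_{I_k}(f)\}_{k \ge 0}$ is a Cauchy sequence and $\bigcup_k I_k=\mathbb{R}^d$.
   Context: Growth condition: $\mu(Q(x,l)) \le C_0\,l^n$ for all $x \in \operatorname{supp}(\mu)$ and $l>0$. Cubes are closed with sides parallel to the axes; $Q(x,l)$ is the cube centered at $x$ of side length $l$; $z_Q$, $\ell(Q)$ are center and side length; $\rho Q$ is concentric with $Q$ of side length $\rho\ell(Q)$. $\mathcal{Q}(\mu)$ is the set of cubes of positive $\mu$-measure (including $\mathbb{R}^d$ if $\mu$ is finite). $Q\in\mathcal{Q}(\mu)$ is doubling if $\mu(2Q)\le 2^{d+1}\mu(Q)$; $\mathcal{Q}(\mu,2)$ is the set of doubling cubes, directed by inclusion. For $Q\in\mathcal{Q}(\mu)$, $Q^*$ is the smallest doubling cube of the form $2^jQ$, $j\ge 0$. For $Q\subset R$, $Q\in\mathcal{Q}(\mu)$,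 let $Q_R$ be the smallest cube concentric with $Q$ containing $R$, $\delta(Q,R):=\int_{\ell(Q)}^{\ell(Q_R)} \mu(Q(z_Q,l))\,l^{-n}\,\frac{dl}{l}$ and $K_{Q,R}:=1+\delta(Q,R)$. $m_Q(f):=\mu(Q)^{-1}\int_Q f\,d\mu$. The Campanato space $\mathcal{C}^p_q(\mu)$ is the set of $f\in L^1_{loc}(\mu)$ with \[ \|f : \mathcal{C}^p_q(\mu)\| := \sup_{Q \in \mathcal{Q}(\mu)} \mu(2Q)^{\frac{1}{p}-\frac{1}{q}} \Big(\int_Q|f(x)-m_{Q^*}(f)|^q\,d\mu(x)\Big)^{\frac{1}{q}} + \sup_{Q \subset R,\ Q,R \in \mathcal{Q}(\mu,2)} \mu(Q)^{\frac{1}{p}} \frac{|m_Q(f)-m_R(f)|}{K_{Q,R}}<\infty. \] *)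

theory Defs
  imports "HOL-Analysis.Analysis"
begin

definition cube :: "'a::euclidean_space \<Rightarrow> real \<Rightarrow> 'a set" where
  "cube x l = cbox (x - (l/2) *\<^sub>R One) (x + (l/2) *\<^sub>R One)"

text \<open>Elements of Q(mu): genuine cubes (centre, side) or the whole space.\<close>
datatype 'a cubeQ = Cube 'a real | Whole

fun cset :: "'a::euclidean_space cubeQ \<Rightarrow> 'a set" where
  "cset (Cube z l) = cube z l"
| "cset Whole = UNIV"

fun dil :: "real \<Rightarrow> 'a::euclidean_space cubeQ \<Rightarrow> 'a cubeQ" where
  "dil r (Cube z l) = Cube z (r * l)"
| "dil r Whole = Whole"

definition radon_measure :: "'a::euclidean_space measure \<Rightarrow> bool" where
  "radon_measure \<mu> \<longleftrightarrow> sets \<mu> = sets borel \<and> (\<forall>K. compact K \<longrightarrow> emeasure \<mu> K < \<infinity>)"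

definition supp :: "'a::euclidean_space measure \<Rightarrow> 'a set" where
  "supp \<mu> = {x. \<forall>e>0. 0 < emeasure \<mu> (ball x e)}"

definition growth :: "'a::euclidean_space measure \<Rightarrow> real \<Rightarrow> real \<Rightarrow> bool" where
  "growth \<mu> C0 n \<longleftrightarrow> (\<forall>x\<in>supp \<mu>. \<forall>l>0. measure \<mu> (cube x l) \<le> C0 * l powr n)"

definition cubesQ :: "'a::euclidean_space measure \<Rightarrow> 'a cubeQ set" where
  "cubesQ \<mu> = {Cube z l | z l. 0 < l \<and> 0 < emeasure \<mu> (cube z l)}
              \<union> {Whole | _::unit. emeasure \<mu> UNIV < \<infinity>}"

definition doubling :: "'a::euclidean_space measure \<Rightarrow> 'a cubeQ \<Rightarrow> bool" where
  "doubling \<mu> Q \<longleftrightarrow> Q \<in> cubesQ \<mu> \<and>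
     measure \<mu> (cset (dil 2 Q)) \<le> 2 ^ (DIM('a) + 1) * measure \<mu> (cset Q)"

definition cubesQ2 :: "'a::euclidean_space measure \<Rightarrow> 'a cubeQ set" where
  "cubesQ2 \<mu> = {Q. doubling \<mu> Q}"

definition star :: "'a::euclidean_space measure \<Rightarrow> 'a cubeQ \<Rightarrow> 'a cubeQ" where
  "star \<mu> Q = dil (2 ^ (LEAST j::nat. doubling \<mu> (dil (2 ^ j) Q))) Q"

definition mean :: "'a::euclidean_space measure \<Rightarrow> 'a cubeQ \<Rightarrow> ('a \<Rightarrow> real) \<Rightarrow> real" where
  "mean \<mu> Q f = (LINT x:cset Q|\<mu>. f x) / measure \<mu> (cset Q)"

text \<open>Side length of Q_R, the smallest cube concentric with Q (centre z) containing R
  (R a genuine cube); it is attained since cubes are closed.\<close>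
definition outer_side :: "'a::euclidean_space \<Rightarrow> 'a set \<Rightarrow> real" where
  "outer_side z R = Inf {l. 0 < l \<and> R \<subseteq> cube z l}"

fun delta :: "'a::euclidean_space measure \<Rightarrow> real \<Rightarrow> 'a cubeQ \<Rightarrow> 'a cubeQ \<Rightarrow> real" where
  "delta \<mu> n (Cube z l) (Cube c s) =
     enn2real (\<integral>\<^sup>+ t\<in>{l..outer_side z (cube c s)}.
                 ennreal (measure \<mu> (cube z t) * t powr (-n) / t) \<partial>lborel)"
| "delta \<mu> n (Cube z l) Whole =
     enn2real (\<integral>\<^sup>+ t\<in>{l..}. ennreal (measure \<mu> (cube z t) * t powr (-n) / t) \<partial>lborel)"
| "delta \<mu> n Whole R = 0"

definition Kconst :: "'a::euclidean_space measure \<Rightarrow> real \<Rightarrow> 'a cubeQ \<Rightarrow> 'a cubeQ \<Rightarrow> real" where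
  "Kconst \<mu> n Q R = 1 + delta \<mu> n Q R"

definition L1_loc :: "'a::euclidean_space measure \<Rightarrow> ('a \<Rightarrow> real) \<Rightarrow> bool" where
  "L1_loc \<mu> f \<longleftrightarrow> f \<in> borel_measurable \<mu> \<and> (\<forall>K. compact K \<longrightarrow> set_integrable \<mu> K f)"

text \<open>f in the Campanato space C^p_q(mu): both suprema in the norm are finite
  (the L^q integrals being finite in particular).\<close>
definition campanato ::
  "'a::euclidean_space measure \<Rightarrow> real \<Rightarrow> real \<Rightarrow> real \<Rightarrow> ('a \<Rightarrow> real) \<Rightarrow> bool" where
  "campanato \<mu> n p q f \<longleftrightarrow> L1_loc \<mu> f \<and>
     (\<exists>B. \<forall>Q\<in>cubesQ \<mu>.
        set_integrable \<mu> (cset Q) (\<lambda>x. \<bar>f x - mean \<mu> (star \<mu> Q) f\<bar> powr q) \<and>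
        measure \<mu> (cset (dil 2 Q)) powr (1/p - 1/q) *
          (LINT x:cset Q|\<mu>. \<bar>f x - mean \<mu> (star \<mu> Q) f\<bar> powr q) powr (1/q) \<le> B) \<and>
     (\<exists>B. \<forall>Q\<in>cubesQ2 \<mu>. \<forall>R\<in>cubesQ2 \<mu>. cset Q \<subseteq> cset R \<longrightarrow>
        measure \<mu> (cset Q) powr (1/p) * \<bar>mean \<mu> Q f - mean \<mu> R f\<bar> / Kconst \<mu> n Q R \<le> B)"

end

theory Submission
  imports Defs
begin

lemma pw_pos: "0 < (t::real) \<Longrightarrow> t powr (real m + 1) = t ^ (m+1)"
  using powr_realpow[of t "Suc m"] by (simp add: add.commute)

lemma mem_cube: "x \<in> cube z l \<longleftrightarrow> (\<forall>i\<in>Basis. \<bar>x\<bullet>i - z\<bullet>i\<bar> \<le> l/2)"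
proof -
  have "\<And>i. (z \<bullet> i - l/2 \<le> x \<bullet> i \<and> x \<bullet> i \<le> z \<bullet> i + l/2) = (\<bar>x\<bullet>i - z\<bullet>i\<bar> \<le> l/2)"
    by (cases "x\<bullet>i \<le> z\<bullet>i") (auto simp: abs_if field_simps)
  thus ?thesis unfolding cube_def mem_box
    by (simp add: inner_diff_left inner_add_left)
qed

lemma cube_mono: "l \<le> l' \<Longrightarrow> cube z l \<subseteq> cube z l'"
  by (auto simp: mem_cube) (smt (verit, best))

lemma cube_shift: "z \<in> cube w L \<Longrightarrow> cube w t \<subseteq> cube z (t + L)"
  by (auto simp: mem_cube) (smt (verit, best))

lemma cube_shift2: "z \<in> cube w L \<Longrightarrow> L \<le> t \<Longrightarrow> cube w t \<subseteq> cube z (2*t)"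
  using cube_shift[of z w L t] cube_mono[of "t+L" "2*t" z] by auto

lemma center_in_cube: "0 \<le> l \<Longrightarrow> z \<in> cube z l"
  by (auto simp: mem_cube)

lemma cube_side_le:
  assumes "0 < a" "cube z a \<subseteq> cube w b" shows "a \<le> b"
proof -
  obtain i :: 'a where i: "i \<in> Basis" using nonempty_Basis by blast
  have "z + (a/2) *\<^sub>R i \<in> cube z a" "z - (a/2) *\<^sub>R i \<in> cube z a"
    using assms(1) i by (auto simp: mem_cube inner_Basis inner_add_left inner_diff_left)
  hence "z + (a/2) *\<^sub>R i \<in> cube w b" "z - (a/2) *\<^sub>R i \<in> cube w b" using assms(2) by auto
  hence "\<bar>z\<bullet>i + a/2 - w\<bullet>i\<bar> \<le> b/2" "\<bar>z\<bullet>i - a/2 - w\<bullet>i\<bar> \<le> b/2"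
    using i by (auto simp: mem_cube inner_add_left inner_diff_left)
  thus ?thesis by linarith
qed

lemma compact_cube: "compact (cube z l)"
  by (simp add: cube_def)

lemma cube_ne_UNIV: "cube z l \<noteq> UNIV"
  using compact_cube[of z l] not_bounded_UNIV compact_imp_bounded by metis

lemma ball_sub_cube: "ball z (l/2) \<subseteq> cube z l"
proof
  fix x assume "x \<in> ball z (l/2)"
  hence "norm (x - z) < l/2" by (simp add: dist_norm norm_minus_commute)
  thus "x \<in> cube z l" unfolding mem_cube
    using Basis_le_norm[of _ "x - z"] by (auto simp: inner_diff_left) (smt (verit, best) Basis_le_norm)
qed

lemma cube_UNIV:
  assumes "\<And>k. real k \<le> s k" shows "(\<Union>k. cube z (s k)) = UNIV"
proof -
  { fix x :: 'a
    obtain k :: nat where k: "2 * norm (x - z) \<le> real k" using real_arch_simple by blast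
    have "x \<in> cube z (s k)" unfolding mem_cube
    proof
      fix i :: 'a assume "i \<in> Basis"
      hence "\<bar>(x - z)\<bullet>i\<bar> \<le> norm (x - z)" by (rule Basis_le_norm)
      thus "\<bar>x\<bullet>i - z\<bullet>i\<bar> \<le> s k / 2" using k assms[of k] by (simp add: inner_diff_left)
    qed
    hence "x \<in> (\<Union>k. cube z (s k))" by blast }
  thus ?thesis by blast
qed


lemma young_pt:
  fixes t X q :: real
  assumes "0 \<le> t" "0 < X" "1 \<le> q"
  shows "t \<le> X + X powr (1-q) * t powr q"
proof (cases "t \<le> X")
  case True thus ?thesis by (simp add: add_increasing2)
next
  case False
  hence tX: "X < t" by simp
  have "X powr (q-1) \<le> t powr (q-1)" using tX assms by (intro powr_mono2) auto
  hence "X powr (1-q) * X powr (q-1) \<le> X powr (1-q) * t powr (q-1)" by (simp add: mult_left_mono)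
  moreover have "X powr (1-q) * X powr (q-1) = 1" using assms by (simp add: powr_add[symmetric])
  ultimately have "1 \<le> X powr (1-q) * t powr (q-1)" by simp
  hence "t * 1 \<le> t * (X powr (1-q) * t powr (q-1))" using assms by (intro mult_left_mono) auto
  also have "t * (X powr (1-q) * t powr (q-1)) = X powr (1-q) * t powr q"
    using tX assms by (simp add: powr_add[symmetric] powr_diff mult.commute)
  finally show ?thesis using assms by simp
qed

lemma set_integral_mono_set_nonneg:
  fixes h :: "_ \<Rightarrow> real"
  assumes "set_integrable M B h" "A \<in> sets M" "A \<subseteq> B" "\<And>x. 0 \<le> h x"
  shows "(LINT x:A|M. h x) \<le> (LINT x:B|M. h x)"
proof -
  have "set_integrable M A h" using assms set_integrable_subset by blast
  thus ?thesis using assms unfolding set_lebesgue_integral_def set_integrable_def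
    by (intro integral_mono) (auto split: split_indicator)
qed

lemma mean_osc:
  fixes g :: "_ \<Rightarrow> real"
  assumes A: "A \<in> sets M" and B: "B \<in> sets M" and AB: "A \<subseteq> B"
    and fin: "emeasure M A < \<infinity>" and mA: "measure M A > 0"
    and ig: "set_integrable M A g" and ih: "set_integrable M B (\<lambda>x. \<bar>g x - c\<bar> powr q)"
    and q: "1 \<le> q" and X: "0 < X"
    and bnd: "(LINT x:B|M. \<bar>g x - c\<bar> powr q) \<le> X powr q * measure M A"
  shows "\<bar>(LINT x:A|M. g x) / measure M A - c\<bar> \<le> 2 * X"
proof -
  have ihA: "set_integrable M A (\<lambda>x. \<bar>g x - c\<bar> powr q)"
    using ih A AB set_integrable_subset by blast
  have ic: "set_integrable M A (\<lambda>x. d)" for d :: real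
    using A fin unfolding set_integrable_def by (simp add: integrable_real_indicator)
  have igc: "set_integrable M A (\<lambda>x. g x - c)" using ig ic by (rule set_integral_diff)
  have e1: "(LINT x:A|M. g x - c) = (LINT x:A|M. g x) - measure M A * c"
    using ig ic A fin by (simp add: set_integral_diff set_integral_const)
  have "\<bar>LINT x:A|M. g x - c\<bar> \<le> (LINT x:A|M. \<bar>g x - c\<bar>)"
    using set_integral_norm_bound[OF igc] by simp
  also have "\<dots> \<le> (LINT x:A|M. X + X powr (1-q) * \<bar>g x - c\<bar> powr q)"
    using igc ic ihA young_pt[OF _ X q]
    by (intro set_integral_mono set_integral_add set_integrable_abs) auto
  also have "\<dots> = X * measure M A + X powr (1-q) * (LINT x:A|M. \<bar>g x - c\<bar> powr q)"
    using ic ihA A fin by (simp add: set_integral_add set_integral_const)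
  also have "\<dots> \<le> X * measure M A + X powr (1-q) * (LINT x:B|M. \<bar>g x - c\<bar> powr q)"
    using set_integral_mono_set_nonneg[OF ih A AB] by (intro add_left_mono mult_left_mono) auto
  also have "\<dots> \<le> X * measure M A + X powr (1-q) * (X powr q * measure M A)"
    using bnd by (intro add_left_mono mult_left_mono) auto
  also have "\<dots> = 2 * X * measure M A"
    using X by (simp add: powr_add[symmetric] mult.assoc[symmetric])
  finally have "\<bar>(LINT x:A|M. g x) - measure M A * c\<bar> \<le> 2 * X * measure M A" using e1 by simp
  moreover have "(LINT x:A|M. g x) / measure M A - c = ((LINT x:A|M. g x) - measure M A * c) / measure M A"
    using mA by (simp add: field_simps)
  ultimately show ?thesis using mA by (simp add: abs_div divide_le_eq)
qed

locale campa =
  fixes \<mu> :: "'a::euclidean_space measure" and C0 n p q :: real and f :: "'a \<Rightarrow> real"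
  assumes radon: "radon_measure \<mu>" and pos: "emeasure \<mu> UNIV > 0"
    and C0: "C0 > 0" and npos: "0 < n" and nd: "n \<le> DIM('a)"
    and growth: "growth \<mu> C0 n"
    and q1: "1 \<le> q" and qp: "q \<le> p"
    and camp: "campanato \<mu> n p q f"
begin

lemma sets_mu: "sets \<mu> = sets borel" using radon by (simp add: radon_measure_def)

lemma borel_mu: "A \<in> sets borel \<Longrightarrow> A \<in> sets \<mu>" by (simp add: sets_mu)

lemma cube_sets[measurable]: "cube z l \<in> sets \<mu>"
  by (rule borel_mu) (simp add: cube_def borel_closed)

lemma cube_fin: "emeasure \<mu> (cube z l) < \<infinity>"
  using radon compact_cube unfolding radon_measure_def by blast

lemma cube_emeasure: "emeasure \<mu> (cube z l) = ennreal (measure \<mu> (cube z l))"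
  using cube_fin[of z l] by (intro emeasure_eq_ennreal_measure) simp

lemma cube_fmeas: "cube z l \<in> fmeasurable \<mu>"
  using cube_fin by (auto simp: fmeasurable_def)

lemma measure_mono_cube: "A \<subseteq> cube z l \<Longrightarrow> A \<in> sets \<mu> \<Longrightarrow> measure \<mu> A \<le> measure \<mu> (cube z l)"
  using measure_mono_fmeasurable[OF _ _ cube_fmeas] by blast

lemma measure_mono_cube2: "cube w t \<subseteq> cube z l \<Longrightarrow> measure \<mu> (cube w t) \<le> measure \<mu> (cube z l)"
  by (rule measure_mono_cube) auto

lemma supp_ne: "\<exists>z. z \<in> supp \<mu>"
proof (rule ccontr)
  assume "\<nexists>z. z \<in> supp \<mu>"
  hence "\<forall>x. \<exists>e>0. emeasure \<mu> (ball x e) = 0" unfolding supp_def by (auto simp: not_less)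
  then obtain e where e: "\<And>x. e x > 0" "\<And>x. emeasure \<mu> (ball x (e x)) = 0" by metis
  have "emeasure \<mu> (cube 0 (real k)) = 0" for k :: nat
  proof -
    obtain C where C: "C \<subseteq> cube 0 (real k)" "finite C" "cube 0 (real k) \<subseteq> (\<Union>c\<in>C. ball c (e c))"
    proof (rule compactE_image[OF compact_cube, of "cube 0 (real k)" "\<lambda>c. ball c (e c)"])
      show "open (ball c (e c))" for c by simp
      show "cube 0 (real k) \<subseteq> (\<Union>c\<in>cube 0 (real k). ball c (e c))"
        using e(1) by force
    qed blast
    have "emeasure \<mu> (cube 0 (real k)) \<le> emeasure \<mu> (\<Union>c\<in>C. ball c (e c))"
      by (intro emeasure_mono C(3)) (auto intro!: borel_mu sets.finite_UN C(2))
    also have "\<dots> \<le> (\<Sum>c\<in>C. emeasure \<mu> (ball c (e c)))"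
      by (intro emeasure_subadditive_finite C(2)) (auto intro!: borel_mu)
    also have "\<dots> = 0" using e(2) by simp
    finally show ?thesis by simp
  qed
  hence "emeasure \<mu> (\<Union>k. cube 0 (real k)) = 0" by (intro emeasure_UN_eq_0) auto
  moreover have "(\<Union>k. cube (0::'a) (real k)) = UNIV" by (rule cube_UNIV) simp
  ultimately show False using pos by simp
qed

lemma supp_pos: assumes "z \<in> supp \<mu>" "0 < l" shows "0 < measure \<mu> (cube z l)"
proof -
  have "0 < emeasure \<mu> (ball z (l/2))" using assms unfolding supp_def by auto
  also have "\<dots> \<le> emeasure \<mu> (cube z l)" by (intro emeasure_mono ball_sub_cube) auto
  finally show ?thesis by (simp add: cube_emeasure)
qed

lemma growth_at: "z \<in> supp \<mu> \<Longrightarrow> 0 < l \<Longrightarrow> measure \<mu> (cube z l) \<le> C0 * l powr n"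
  using growth by (auto simp: growth_def)



lemma Cube_cubesQ: "Cube z l \<in> cubesQ \<mu> \<longleftrightarrow> 0 < l \<and> 0 < measure \<mu> (cube z l)"
  by (auto simp: cubesQ_def cube_emeasure)

lemma doubling_Cube: "doubling \<mu> (Cube z l) \<longleftrightarrow>
   0 < l \<and> 0 < measure \<mu> (cube z l) \<and> measure \<mu> (cube z (2*l)) \<le> 2 ^ (DIM('a)+1) * measure \<mu> (cube z l)"
  by (auto simp: doubling_def Cube_cubesQ)

lemma mean_Cube: "mean \<mu> (Cube z l) g = (LINT x:cube z l|\<mu>. g x) / measure \<mu> (cube z l)"
  by (simp add: mean_def)

lemma star_doubling: assumes "doubling \<mu> Q" shows "star \<mu> Q = Q"
proof -
  have d1: "dil 1 Q = Q" by (cases Q) auto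
  have "(LEAST j::nat. doubling \<mu> (dil (2 ^ j) Q)) = 0"
    using assms d1 by (intro Least_eq_0) simp
  thus ?thesis using d1 by (simp add: star_def)
qed

lemma f_meas: "f \<in> borel_measurable \<mu>" using camp by (simp add: campanato_def L1_loc_def)

lemma f_int: "set_integrable \<mu> (cube z l) f"
  using camp compact_cube unfolding campanato_def L1_loc_def by blast

lemma first_cond: "\<exists>B>0. \<forall>Q\<in>cubesQ \<mu>.
        set_integrable \<mu> (cset Q) (\<lambda>x. \<bar>f x - mean \<mu> (star \<mu> Q) f\<bar> powr q) \<and>
        measure \<mu> (cset (dil 2 Q)) powr (1/p - 1/q) *
          (LINT x:cset Q|\<mu>. \<bar>f x - mean \<mu> (star \<mu> Q) f\<bar> powr q) powr (1/q) \<le> B"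
proof -
  obtain B where "\<forall>Q\<in>cubesQ \<mu>.
        set_integrable \<mu> (cset Q) (\<lambda>x. \<bar>f x - mean \<mu> (star \<mu> Q) f\<bar> powr q) \<and>
        measure \<mu> (cset (dil 2 Q)) powr (1/p - 1/q) *
          (LINT x:cset Q|\<mu>. \<bar>f x - mean \<mu> (star \<mu> Q) f\<bar> powr q) powr (1/q) \<le> B"
    using camp unfolding campanato_def by blast
  thus ?thesis by (intro exI[of _ "max B 1"]) force
qed

lemma second_cond: "\<exists>B\<ge>0. \<forall>Q\<in>cubesQ2 \<mu>. \<forall>R\<in>cubesQ2 \<mu>. cset Q \<subseteq> cset R \<longrightarrow>
        measure \<mu> (cset Q) powr (1/p) * \<bar>mean \<mu> Q f - mean \<mu> R f\<bar> / Kconst \<mu> n Q R \<le> B"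
proof -
  obtain B where "\<forall>Q\<in>cubesQ2 \<mu>. \<forall>R\<in>cubesQ2 \<mu>. cset Q \<subseteq> cset R \<longrightarrow>
        measure \<mu> (cset Q) powr (1/p) * \<bar>mean \<mu> Q f - mean \<mu> R f\<bar> / Kconst \<mu> n Q R \<le> B"
    using camp unfolding campanato_def by blast
  thus ?thesis by (intro exI[of _ "max B 0"]) force
qed

lemma K_ge1: "1 \<le> Kconst \<mu> n Q R"
proof -
  have "0 \<le> delta \<mu> n Q R" by (cases Q; cases R) auto
  thus ?thesis by (simp add: Kconst_def)
qed

lemma estA: "\<exists>CA>0. \<forall>z l w L. doubling \<mu> (Cube z l) \<longrightarrow> doubling \<mu> (Cube w L) \<longrightarrow>
   cube z l \<subseteq> cube w L \<longrightarrow>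
   \<bar>mean \<mu> (Cube z l) f - mean \<mu> (Cube w L) f\<bar> \<le>
      CA * measure \<mu> (cube z l) powr (-1/q) * measure \<mu> (cube w (2*L)) powr (1/q - 1/p)"
proof -
  obtain B where B: "B > 0" and HB: "\<forall>Q\<in>cubesQ \<mu>.
        set_integrable \<mu> (cset Q) (\<lambda>x. \<bar>f x - mean \<mu> (star \<mu> Q) f\<bar> powr q) \<and>
        measure \<mu> (cset (dil 2 Q)) powr (1/p - 1/q) *
          (LINT x:cset Q|\<mu>. \<bar>f x - mean \<mu> (star \<mu> Q) f\<bar> powr q) powr (1/q) \<le> B"
    using first_cond by blast
  show ?thesis
  proof (intro exI[of _ "2*B"] conjI allI impI)
    show "0 < 2*B" using B by simp
    fix z l w L assume dQ: "doubling \<mu> (Cube z l)" and dR: "doubling \<mu> (Cube w L)"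
      and sub: "cube z l \<subseteq> cube w L"
    let ?c = "mean \<mu> (Cube w L) f"
    let ?I = "LINT x:cube w L|\<mu>. \<bar>f x - ?c\<bar> powr q"
    define a where "a = measure \<mu> (cube w (2*L))"
    define b where "b = measure \<mu> (cube z l)"
    have RQ: "Cube w L \<in> cubesQ \<mu>" using dR by (simp add: doubling_def)
    have hb: "0 < b" "0 < l" using dQ by (auto simp: doubling_Cube b_def)
    have hL: "0 < L" "0 < measure \<mu> (cube w L)" using dR by (auto simp: doubling_Cube)
    have "measure \<mu> (cube w L) \<le> a" unfolding a_def using hL by (intro measure_mono_cube2 cube_mono) auto
    hence ha: "0 < a" using hL by simp
    from HB RQ star_doubling[OF dR]
    have iI: "set_integrable \<mu> (cube w L) (\<lambda>x. \<bar>f x - ?c\<bar> powr q)"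
      and cI: "a powr (1/p - 1/q) * ?I powr (1/q) \<le> B" by (auto simp: a_def)
    have I0: "0 \<le> ?I" unfolding set_lebesgue_integral_def by (rule Bochner_Integration.integral_nonneg) (auto simp: indicator_def)
    have qpos: "0 < q" using q1 by simp
    have "a powr (1/q - 1/p) * (a powr (1/p - 1/q) * ?I powr (1/q)) \<le> a powr (1/q - 1/p) * B"
      using cI by (intro mult_left_mono) auto
    moreover have "a powr (1/q - 1/p) * a powr (1/p - 1/q) = 1" using ha by (simp add: powr_add[symmetric])
    ultimately have J: "?I powr (1/q) \<le> B * a powr (1/q - 1/p)" by (simp add: mult.assoc[symmetric] mult.commute)
    have "?I = (?I powr (1/q)) powr q" using I0 qpos by (simp add: powr_powr)
    also have "\<dots> \<le> (B * a powr (1/q - 1/p)) powr q" using J qpos by (intro powr_mono2) auto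
    finally have Ile: "?I \<le> (B * a powr (1/q - 1/p)) powr q" .
    define X where "X = B * a powr (1/q - 1/p) * b powr (-1/q)"
    have X0: "0 < X" using B ha hb by (simp add: X_def)
    have "X powr q * b = (B * a powr (1/q - 1/p)) powr q * ((b powr (-1/q)) powr q * b)"
      using B ha hb by (simp add: X_def powr_mult)
    moreover have "(b powr (-1/q)) powr q * b = 1"
    proof -
      have "(b powr (-1/q)) powr q = b powr (-1)" by (subst powr_powr) (use qpos in simp)
      thus ?thesis using hb by (simp add: powr_minus)
    qed
    ultimately have Xq: "X powr q * b = (B * a powr (1/q - 1/p)) powr q" by (metis mult.right_neutral)
    have "\<bar>(LINT x:cube z l|\<mu>. f x) / measure \<mu> (cube z l) - ?c\<bar> \<le> 2 * X"
      by (rule mean_osc[OF cube_sets cube_sets sub cube_fin _ f_int iI q1 X0])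
        (use hb Ile Xq b_def in auto)
    thus "\<bar>mean \<mu> (Cube z l) f - ?c\<bar> \<le> 2 * B * measure \<mu> (cube z l) powr (-1/q) * measure \<mu> (cube w (2*L)) powr (1/q - 1/p)"
      by (simp add: mean_Cube X_def a_def b_def mult_ac)
  qed
qed

lemma estB: "\<exists>CB\<ge>0. \<forall>z l w L. doubling \<mu> (Cube z l) \<longrightarrow> doubling \<mu> (Cube w L) \<longrightarrow>
   cube z l \<subseteq> cube w L \<longrightarrow>
   \<bar>mean \<mu> (Cube z l) f - mean \<mu> (Cube w L) f\<bar> \<le>
      CB * Kconst \<mu> n (Cube z l) (Cube w L) * measure \<mu> (cube z l) powr (-1/p)"
proof -
  obtain B where B: "B \<ge> 0" and HB: "\<forall>Q\<in>cubesQ2 \<mu>. \<forall>R\<in>cubesQ2 \<mu>. cset Q \<subseteq> cset R \<longrightarrow>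
        measure \<mu> (cset Q) powr (1/p) * \<bar>mean \<mu> Q f - mean \<mu> R f\<bar> / Kconst \<mu> n Q R \<le> B"
    using second_cond by blast
  show ?thesis
  proof (intro exI[of _ B] conjI allI impI)
    show "0 \<le> B" by fact
    fix z l w L assume dQ: "doubling \<mu> (Cube z l)" and dR: "doubling \<mu> (Cube w L)"
      and sub: "cube z l \<subseteq> cube w L"
    let ?K = "Kconst \<mu> n (Cube z l) (Cube w L)"
    let ?d = "\<bar>mean \<mu> (Cube z l) f - mean \<mu> (Cube w L) f\<bar>"
    define b where "b = measure \<mu> (cube z l)"
    have hb: "0 < b" using dQ by (auto simp: doubling_Cube b_def)
    have K1: "1 \<le> ?K" by (rule K_ge1)
    have "b powr (1/p) * ?d / ?K \<le> B" using HB dQ dR sub by (auto simp: cubesQ2_def b_def)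
    hence "b powr (1/p) * ?d \<le> B * ?K" using K1 by (simp add: divide_le_eq)
    hence "?d \<le> B * ?K / b powr (1/p)" using hb by (simp add: le_divide_eq mult.commute)
    thus "?d \<le> B * ?K * measure \<mu> (cube z l) powr (-1/p)"
      using hb by (simp add: b_def powr_minus_divide divide_inverse powr_minus)
  qed
qed

lemma outer_le: assumes "0 < T" "R \<subseteq> cube z T" shows "outer_side z R \<le> T"
  unfolding outer_side_def using assms by (intro cInf_lower) (auto intro: bdd_belowI[of _ 0])

lemma powr_aux1:
  fixes t A D m :: real assumes "0 < t"
  shows "A * t powr (D+1) * t powr (-m) / t = A * t powr (D - m)"
proof -
  have "t powr (D+1) = t powr (D - m + m + 1)" by simp
  also have "\<dots> = t powr (D - m) * t powr m * t"
    unfolding powr_add using assms by simp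
  finally have "t powr (D+1) = t powr (D - m) * t powr m * t" .
  moreover have "t powr m * t powr (-m) = 1" using assms by (simp add: powr_add[symmetric])
  ultimately show ?thesis using assms by (simp add: field_simps)
qed

lemma powr_aux2:
  fixes T D m :: real assumes "0 < T"
  shows "T powr (D - m) * T = T powr (D + 1 - m)"
proof -
  have "T powr (D + 1 - m) = T powr ((D - m) + 1)" by (simp add: algebra_simps)
  thus ?thesis unfolding powr_add using assms by simp
qed

lemma delta_bound:
  assumes l: "0 < l" "l \<le> T" and sub: "cube c s \<subseteq> cube z T" and A: "0 \<le> A"
    and mb: "\<And>t. l \<le> t \<Longrightarrow> t \<le> T \<Longrightarrow> measure \<mu> (cube z t) \<le> A * t powr (real DIM('a)+1)"
  shows "delta \<mu> n (Cube z l) (Cube c s) \<le> A * T powr (real DIM('a) + 1 - n)"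
proof -
  have T0: "0 < T" using l by simp
  have os: "outer_side z (cube c s) \<le> T" by (rule outer_le[OF T0 sub])
  have dn: "0 \<le> real DIM('a) - n" using nd by simp
  have pt: "ennreal (measure \<mu> (cube z t) * t powr (-n) / t) * indicator {l..outer_side z (cube c s)} t
      \<le> ennreal (A * T powr (real DIM('a) - n)) * indicator {l..T} t" for t
  proof (cases "l \<le> t \<and> t \<le> outer_side z (cube c s)")
    case True
    hence t: "l \<le> t" "t \<le> T" "0 < t" using os l by auto
    have "measure \<mu> (cube z t) * t powr (-n) / t \<le> A * t powr (real DIM('a)+1) * t powr (-n) / t"
      using mb[OF t(1,2)] t by (intro divide_right_mono mult_right_mono) auto
    also have "A * t powr (real DIM('a)+1) * t powr (-n) / t = A * t powr (real DIM('a) - n)"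
      using t by (intro powr_aux1) auto
    also have "\<dots> \<le> A * T powr (real DIM('a) - n)" using t dn A by (intro mult_left_mono powr_mono2) auto
    finally show ?thesis using True os by (auto simp: indicator_def intro: ennreal_leI)
  qed (auto simp: indicator_def)
  have "(\<integral>\<^sup>+ t\<in>{l..outer_side z (cube c s)}. ennreal (measure \<mu> (cube z t) * t powr (-n) / t) \<partial>lborel)
      \<le> (\<integral>\<^sup>+ t. ennreal (A * T powr (real DIM('a) - n)) * indicator {l..T} t \<partial>lborel)"
    by (intro nn_integral_mono pt)
  also have "\<dots> = ennreal (A * T powr (real DIM('a) - n)) * ennreal (T - l)"
    using l by (simp add: nn_integral_cmult_indicator)
  also have "\<dots> = ennreal (A * T powr (real DIM('a) - n) * (T - l))"
    using l A by (simp add: ennreal_mult)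
  also have "\<dots> \<le> ennreal (A * T powr (real DIM('a) + 1 - n))"
  proof (intro ennreal_leI)
    have "A * T powr (real DIM('a) - n) * (T - l) \<le> A * T powr (real DIM('a) - n) * T" using l A by (intro mult_left_mono) auto
    also have "\<dots> = A * T powr (real DIM('a) + 1 - n)" using T0 powr_aux2[OF T0] by (simp add: mult.assoc)
    finally show "A * T powr (real DIM('a) - n) * (T - l) \<le> A * T powr (real DIM('a) + 1 - n)" .
  qed
  finally show ?thesis using A T0 by (simp add: enn2real_leI)
qed

lemma nondbl_step: assumes "0 < l" "\<not> doubling \<mu> (Cube w l)"
  shows "measure \<mu> (cube w l) * 2^(DIM('a)+1) \<le> measure \<mu> (cube w (2*l))"
proof (cases "0 < measure \<mu> (cube w l)")
  case True thus ?thesis using assms by (auto simp: doubling_Cube mult.commute)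
next
  case False
  hence "measure \<mu> (cube w l) = 0" using measure_nonneg[of \<mu> "cube w l"] by linarith
  thus ?thesis by simp
qed

definition "CAc = (SOME CA. CA > 0 \<and> (\<forall>z l w L. doubling \<mu> (Cube z l) \<longrightarrow> doubling \<mu> (Cube w L) \<longrightarrow>
   cube z l \<subseteq> cube w L \<longrightarrow>
   \<bar>mean \<mu> (Cube z l) f - mean \<mu> (Cube w L) f\<bar> \<le>
      CA * measure \<mu> (cube z l) powr (-1/q) * measure \<mu> (cube w (2*L)) powr (1/q - 1/p)))"

lemma CAc: "CAc > 0" "doubling \<mu> (Cube z l) \<Longrightarrow> doubling \<mu> (Cube w L) \<Longrightarrow>
   cube z l \<subseteq> cube w L \<Longrightarrow>
   \<bar>mean \<mu> (Cube z l) f - mean \<mu> (Cube w L) f\<bar> \<le>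
      CAc * measure \<mu> (cube z l) powr (-1/q) * measure \<mu> (cube w (2*L)) powr (1/q - 1/p)"
  using someI_ex[OF estA] unfolding CAc_def by blast+

definition "CBc = (SOME CB. CB \<ge> 0 \<and> (\<forall>z l w L. doubling \<mu> (Cube z l) \<longrightarrow> doubling \<mu> (Cube w L) \<longrightarrow>
   cube z l \<subseteq> cube w L \<longrightarrow>
   \<bar>mean \<mu> (Cube z l) f - mean \<mu> (Cube w L) f\<bar> \<le>
      CB * Kconst \<mu> n (Cube z l) (Cube w L) * measure \<mu> (cube z l) powr (-1/p)))"

lemma CBc: "CBc \<ge> 0" "doubling \<mu> (Cube z l) \<Longrightarrow> doubling \<mu> (Cube w L) \<Longrightarrow>
   cube z l \<subseteq> cube w L \<Longrightarrow>
   \<bar>mean \<mu> (Cube z l) f - mean \<mu> (Cube w L) f\<bar> \<le>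
      CBc * Kconst \<mu> n (Cube z l) (Cube w L) * measure \<mu> (cube z l) powr (-1/p)"
  using someI_ex[OF estB] unfolding CBc_def by blast+

context fixes z assumes z: "z \<in> supp \<mu>"
begin

abbreviation "aa e \<equiv> measure \<mu> (cube z ((2::real)^e))"

lemma aa_pos: "0 < aa e" using supp_pos[OF z] by simp

lemma aa_mono: "e \<le> e' \<Longrightarrow> aa e \<le> aa e'"
  by (intro measure_mono_cube2 cube_mono) simp

lemma chain_nd: "(\<forall>i. e \<le> i \<and> i < e + k \<longrightarrow> \<not> doubling \<mu> (Cube z (2^i))) \<Longrightarrow>
    aa e * 2^((DIM('a)+1)*k) \<le> aa (e+k)"
proof (induction k)
  case 0 thus ?case by simp
next
  case (Suc k)
  have IH: "aa e * 2^((DIM('a)+1)*k) \<le> aa (e+k)" using Suc by auto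
  have nd: "\<not> doubling \<mu> (Cube z (2^(e+k)))" using Suc.prems by auto
  have "aa e * 2^((DIM('a)+1)*Suc k) = (aa e * 2^((DIM('a)+1)*k)) * 2^(DIM('a)+1)"
    by (simp add: power_add mult_ac)
  also have "\<dots> \<le> aa (e+k) * 2^(DIM('a)+1)" using IH by (intro mult_right_mono) auto
  also have "\<dots> \<le> measure \<mu> (cube z (2 * 2^(e+k)))" by (rule nondbl_step[OF _ nd]) simp
  also have "(2::real) * 2^(e+k) = 2^(e + Suc k)" by simp
  finally show ?case .
qed

lemma tolsa_pt:
  assumes a0: "1 \<le> a0" and ndb: "\<forall>e. e < h \<and> a0 < 2^e \<longrightarrow> \<not> doubling \<mu> (Cube z (2^e))"
    and u: "a0 \<le> u"
  shows "measure \<mu> (cube z u) \<le> C0 * 2^(DIM('a)+1) * u^(DIM('a)+1) * ((2::real)^h) powr (n - real (DIM('a)+1))"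
proof -
  define S :: real where "S = 2^h"
  define dd where "dd = DIM('a)+1"
  define S' where "S' = S powr (n - real dd)"
  have u0: "0 < u" using a0 u by simp
  have S0: "0 < S" by (simp add: S_def)
  have S'0: "0 \<le> S'" by (simp add: S'_def)
  have ndd: "n - real dd \<le> 0" using nd by (simp add: dd_def)
  have Sn: "S powr n = S^dd * S'"
  proof -
    have "S powr n = S powr (real dd + (n - real dd))" by simp
    also have "\<dots> = S^dd * S'" unfolding powr_add S'_def using S0 by (simp add: powr_realpow)
    finally show ?thesis .
  qed
  have goal: "measure \<mu> (cube z u) \<le> C0 * 2^dd * u^dd * S'"
  proof (cases "S \<le> u")
    case True
    have "measure \<mu> (cube z u) \<le> C0 * u powr n" using growth_at[OF z u0] .
    also have "u powr n = u^dd * u powr (n - real dd)"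
    proof -
      have "u powr n = u powr (real dd + (n - real dd))" by simp
      also have "\<dots> = u^dd * u powr (n - real dd)" unfolding powr_add using u0 by (simp add: powr_realpow)
      finally show ?thesis .
    qed
    also have "u powr (n - real dd) \<le> S'" unfolding S'_def using powr_mono2'[OF ndd S0 True] .
    hence "C0 * (u^dd * u powr (n - real dd)) \<le> C0 * (u^dd * S')"
      using C0 u0 by (intro mult_left_mono) auto
    also have "\<dots> \<le> C0 * 2^dd * u^dd * S'"
    proof -
      have "1 * (C0 * u^dd * S') \<le> 2^dd * (C0 * u^dd * S')"
        using C0 u0 S'0 by (intro mult_right_mono) auto
      thus ?thesis by (simp add: mult_ac)
    qed
    finally show ?thesis by simp
  next
    case False
    hence uS: "u < S" by simp
    define e where "e = (LEAST e. u < (2::real)^e)"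
    have ue: "u < 2^e" unfolding e_def by (rule LeastI[of _ h]) (use uS S_def in simp)
    have eh: "e \<le> h" unfolding e_def by (rule Least_le) (use uS S_def in simp)
    have e0: "e \<noteq> 0"
    proof
      assume "e = 0" thus False using ue a0 u by simp
    qed
    then obtain e1 where e1: "e = Suc e1" using not0_implies_Suc by blast
    have "\<not> u < 2^e1" using not_less_Least[of e1 "\<lambda>e. u < (2::real)^e"] e1 e_def by simp
    hence E2u: "(2::real)^e \<le> 2*u" using e1 by simp
    have "aa e * 2^(dd*(h-e)) \<le> aa (e + (h-e))"
      unfolding dd_def
    proof (rule chain_nd, intro allI impI)
      fix i assume i: "e \<le> i \<and> i < e + (h - e)"
      have "(2::real)^e \<le> 2^i" using i by (intro power_increasing) auto
      hence "a0 < 2^i" using ue u by linarith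
      moreover have "i < h" using i eh by simp
      ultimately show "\<not> doubling \<mu> (Cube z (2^i))" using ndb by blast
    qed
    also have "e + (h - e) = h" using eh by simp
    also have "aa h \<le> C0 * S powr n" unfolding S_def by (rule growth_at[OF z]) simp
    finally have ch: "aa e * 2^(dd*(h-e)) \<le> C0 * (S^dd * S')" using Sn by simp
    have mu_le: "measure \<mu> (cube z u) \<le> aa e" by (intro measure_mono_cube2 cube_mono) (use ue in simp)
    have pw: "((2::real)^e)^dd * 2^(dd*(h-e)) = S^dd"
    proof -
      have "((2::real)^e)^dd * 2^(dd*(h-e)) = 2^(e*dd + dd*(h-e))" by (simp add: power_mult power_add)
      also have "e*dd + dd*(h-e) = h*dd" using eh by (simp add: algebra_simps diff_mult_distrib2)
      finally show ?thesis by (simp add: S_def power_mult)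
    qed
    have "measure \<mu> (cube z u) * S^dd = measure \<mu> (cube z u) * (((2::real)^e)^dd * 2^(dd*(h-e)))"
      using pw by simp
    also have "\<dots> \<le> aa e * (((2::real)^e)^dd * 2^(dd*(h-e)))" using mu_le by (intro mult_right_mono) auto
    also have "\<dots> = (aa e * 2^(dd*(h-e))) * ((2::real)^e)^dd" by (simp add: mult_ac)
    also have "\<dots> \<le> C0 * (S^dd * S') * ((2::real)^e)^dd" using ch by (intro mult_right_mono) auto
    also have "\<dots> \<le> C0 * (S^dd * S') * (2*u)^dd"
      using E2u C0 S0 S'0 by (intro mult_left_mono power_mono) auto
    also have "\<dots> = (C0 * 2^dd * u^dd * S') * S^dd" by (simp add: power_mult_distrib mult_ac)
    finally show ?thesis using S0 by simp
  qed
  thus ?thesis by (simp add: S'_def S_def dd_def)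
qed


lemma E_unbounded: "\<exists>e\<ge>k. doubling \<mu> (Cube z (2^e))"
proof (rule ccontr)
  assume "\<not> ?thesis"
  hence ndc: "\<forall>i. k \<le> i \<and> i < k + j \<longrightarrow> \<not> doubling \<mu> (Cube z (2^i))" for j by auto
  define dd where "dd = DIM('a)+1"
  define X where "X = C0 * 2 powr (real k * n) / aa k"
  obtain j :: nat where j: "X < real j" using reals_Archimedean2 by blast
  have "aa k * 2^(dd*j) \<le> aa (k+j)" unfolding dd_def by (rule chain_nd[OF ndc])
  also have "\<dots> \<le> C0 * ((2::real)^(k+j)) powr n" by (rule growth_at[OF z]) simp
  also have "((2::real)^(k+j)) powr n = 2 powr (real k * n) * 2 powr (real j * n)"
    by (simp add: powr_realpow[symmetric] powr_powr powr_add[symmetric] algebra_simps)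
  also have "2 powr (real j * n) \<le> 2 powr (real j * real (DIM('a)))"
    using nd by (intro powr_mono mult_left_mono) auto
  hence "C0 * (2 powr (real k * n) * 2 powr (real j * n)) \<le> C0 * (2 powr (real k * n) * 2 powr (real j * real (DIM('a))))"
    using C0 by (intro mult_left_mono) auto
  finally have A: "aa k * 2^(dd*j) \<le> C0 * 2 powr (real k * n) * 2^(DIM('a)*j)"
    by (simp add: powr_realpow[symmetric] powr_powr mult_ac)
  have "(2::real)^(dd*j) = 2^(DIM('a)*j) * 2^j" by (simp add: dd_def power_add algebra_simps)
  hence "(aa k * 2^j) * 2^(DIM('a)*j) \<le> (C0 * 2 powr (real k * n)) * 2^(DIM('a)*j)"
    using A by (simp add: mult_ac)
  hence "aa k * 2^j \<le> C0 * 2 powr (real k * n)" by simp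
  hence "2^j \<le> X" using aa_pos[of k] by (simp add: X_def field_simps)
  moreover have "real j < 2^j"
  proof -
    have "j < 2^j" by (rule less_exp)
    hence "real j < real (2^j)" by (simp only: of_nat_less_iff)
    thus ?thesis by simp
  qed
  ultimately show False using j by simp
qed

lemma S_aux: "0 < (S::real) \<Longrightarrow> S powr (n - real (DIM('a)+1)) * S powr (real DIM('a) + 1 - n) = 1"
  by (simp add: powr_add[symmetric])

lemma delta_consec:
  assumes gh: "g < h" and ndb: "\<forall>e. g < e \<and> e < h \<longrightarrow> \<not> doubling \<mu> (Cube z (2^e))"
  shows "delta \<mu> n (Cube z (2^g)) (Cube z (2^h)) \<le> C0 * 2^(DIM('a)+1)"
proof -
  define S :: real where "S = 2^h"
  define A where "A = C0 * 2^(DIM('a)+1) * S powr (n - real (DIM('a)+1))"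
  have S0: "0 < S" by (simp add: S_def)
  have A0: "0 \<le> A" using C0 by (simp add: A_def)
  have "delta \<mu> n (Cube z (2^g)) (Cube z (2^h)) \<le> A * S powr (real DIM('a) + 1 - n)"
    unfolding S_def
  proof (rule delta_bound)
    show "0 < (2::real)^g" by simp
    show "(2::real)^g \<le> 2^h" using gh by (intro power_increasing) auto
    show "cube z (2 ^ h) \<subseteq> cube z (2 ^ h)" by simp
    show "0 \<le> A" by fact
    fix t assume t: "2^g \<le> t" "t \<le> (2::real)^h"
    have "measure \<mu> (cube z t) \<le> C0 * 2^(DIM('a)+1) * t^(DIM('a)+1) * ((2::real)^h) powr (n - real (DIM('a)+1))"
    proof (rule tolsa_pt[OF _ _ t(1)])
      show "1 \<le> (2::real)^g" by simp
      show "\<forall>e. e < h \<and> 2^g < (2::real)^e \<longrightarrow> \<not> doubling \<mu> (Cube z (2^e))"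
        using ndb by (auto simp: power_strict_increasing_iff)
    qed
    also have "t^(DIM('a)+1) = t powr (real DIM('a) + 1)"
      using t by (intro pw_pos[symmetric]) (smt (verit) zero_less_power)
    finally show "measure \<mu> (cube z t) \<le> A * t powr (real DIM('a) + 1)"
      by (simp add: A_def S_def mult_ac)
  qed
  also have "A * S powr (real DIM('a) + 1 - n) = C0 * 2^(DIM('a)+1)"
    unfolding A_def using S_aux[OF S0] by (simp add: mult.assoc)
  finally show ?thesis .
qed

lemma delta_R:
  assumes zR: "z \<in> cube w L" and L: "1 \<le> L" and Lh: "2*L \<le> 2^h"
    and ndb: "\<forall>e. e < h \<and> 2*L < 2^e \<longrightarrow> \<not> doubling \<mu> (Cube z (2^e))"
  shows "delta \<mu> n (Cube w L) (Cube z (2^h)) \<le> C0 * 2^(DIM('a)+1) * 2^(DIM('a)+1) * 2^(DIM('a)+1)"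
proof -
  define dd where "dd = DIM('a)+1"
  define S :: real where "S = 2^h"
  define A where "A = C0 * 2^dd * 2^dd * S powr (n - real dd)"
  have S0: "0 < S" by (simp add: S_def)
  have A0: "0 \<le> A" using C0 by (simp add: A_def)
  have wz: "w \<in> cube z L" using zR by (auto simp: mem_cube abs_minus_commute)
  have d1: "delta \<mu> n (Cube w L) (Cube z S) \<le> A * (S + L) powr (real DIM('a) + 1 - n)"
  proof (rule delta_bound)
    show "0 < L" "L \<le> S + L" using L S0 by auto
    show "cube z S \<subseteq> cube w (S + L)" by (rule cube_shift[OF wz])
    show "0 \<le> A" by fact
    fix t assume t: "L \<le> t" "t \<le> S + L"
    have "measure \<mu> (cube w t) \<le> measure \<mu> (cube z (2*t))"
      by (intro measure_mono_cube2 cube_shift2[OF zR t(1)])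
    also have "\<dots> \<le> C0 * 2^dd * (2*t)^dd * S powr (n - real dd)"
      unfolding dd_def S_def
    proof (rule tolsa_pt)
      show "1 \<le> 2*L" using L by simp
      show "\<forall>e. e < h \<and> 2*L < (2::real)^e \<longrightarrow> \<not> doubling \<mu> (Cube z (2^e))" by fact
      show "2*L \<le> 2*t" using t by simp
    qed
    also have "(2*t)^dd = 2^dd * t powr (real DIM('a) + 1)"
      using t L by (simp add: power_mult_distrib pw_pos dd_def)
    finally show "measure \<mu> (cube w t) \<le> A * t powr (real DIM('a) + 1)"
      by (simp add: A_def mult_ac)
  qed
  have "(S + L) powr (real DIM('a) + 1 - n) \<le> (2*S) powr (real DIM('a) + 1 - n)"
    using Lh L S0 nd by (intro powr_mono2) (auto simp: S_def)
  also have "(2*S) powr (real DIM('a) + 1 - n) = 2 powr (real DIM('a) + 1 - n) * S powr (real DIM('a) + 1 - n)"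
    by (simp add: powr_mult)
  also have "2 powr (real DIM('a) + 1 - n) \<le> 2 powr (real dd)" using npos by (intro powr_mono) (auto simp: dd_def)
  also have "(2::real) powr (real dd) = 2^dd" by (simp add: powr_realpow)
  finally have p1: "(S + L) powr (real DIM('a) + 1 - n) \<le> 2^dd * S powr (real DIM('a) + 1 - n)"
    by (metis mult_right_mono powr_ge_zero)
  have "delta \<mu> n (Cube w L) (Cube z S) \<le> A * (2^dd * S powr (real DIM('a) + 1 - n))"
    using d1 mult_left_mono[OF p1 A0] by linarith
  also have "A * (2^dd * S powr (real DIM('a) + 1 - n)) = C0 * 2^dd * 2^dd * 2^dd"
    unfolding A_def dd_def using S_aux[OF S0] by (simp add: mult_ac)
  finally show ?thesis by (simp add: S_def dd_def)
qed

abbreviation "mm e \<equiv> mean \<mu> (Cube z ((2::real)^e)) f"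
abbreviation "DB e \<equiv> doubling \<mu> (Cube z ((2::real)^e))"

definition "C6 = CAc * (2^(DIM('a)+2)) powr (1/q - 1/p)"
definition "C7 = CBc * (1 + C0 * 2^(DIM('a)+1))"

lemma kappa: "0 \<le> 1/q - 1/p" using q1 qp by (simp add: field_simps)

lemma ppos: "0 < p" using q1 qp by simp

lemma C6_nonneg: "0 \<le> C6" using CAc(1) by (simp add: C6_def)
lemma C7_nonneg: "0 \<le> C7" using CBc(1) C0 by (simp add: C7_def)

lemma stepA: assumes "DB e" "DB e'" "e \<le> e'" "aa e' \<le> 2 * aa e"
  shows "\<bar>mm e - mm e'\<bar> \<le> C6 * aa e powr (-1/p)"
proof -
  let ?M = "measure \<mu> (cube z (2*2^e'))"
  have b1: "\<bar>mm e - mm e'\<bar> \<le> CAc * aa e powr (-1/q) * ?M powr (1/q - 1/p)"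
    using assms by (intro CAc(2)) (auto intro!: cube_mono power_increasing)
  have "?M \<le> 2^(DIM('a)+1) * aa e'"
    using assms(2) by (simp add: doubling_Cube)
  also have "\<dots> \<le> 2^(DIM('a)+1) * (2 * aa e)" using assms(4) by (intro mult_left_mono) auto
  also have "\<dots> = 2^(DIM('a)+2) * aa e" by simp
  finally have "?M powr (1/q - 1/p) \<le> (2^(DIM('a)+2) * aa e) powr (1/q - 1/p)"
    using kappa by (intro powr_mono2) auto
  hence b2: "CAc * aa e powr (-1/q) * ?M powr (1/q - 1/p) \<le> CAc * aa e powr (-1/q) * (2^(DIM('a)+2) * aa e) powr (1/q - 1/p)"
    using CAc(1) by (intro mult_left_mono) auto
  have "CAc * aa e powr (-1/q) * (2^(DIM('a)+2) * aa e) powr (1/q - 1/p) = C6 * (aa e powr (-1/q) * aa e powr (1/q - 1/p))"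
    by (simp add: C6_def powr_mult mult_ac)
  also have "aa e powr (-1/q) * aa e powr (1/q - 1/p) = aa e powr (-1/p)"
    using aa_pos[of e] by (simp add: powr_add[symmetric] diff_divide_distrib)
  finally show ?thesis using b1 b2 by linarith
qed

lemma stepB: assumes "DB g" "DB h" "g < h" "\<forall>x. g < x \<and> x < h \<longrightarrow> \<not> DB x"
  shows "\<bar>mm g - mm h\<bar> \<le> C7 * aa g powr (-1/p)"
proof -
  have "\<bar>mm g - mm h\<bar> \<le> CBc * Kconst \<mu> n (Cube z (2^g)) (Cube z (2^h)) * aa g powr (-1/p)"
    using assms by (intro CBc(2)) (auto intro!: cube_mono power_increasing)
  also have "Kconst \<mu> n (Cube z (2^g)) (Cube z (2^h)) \<le> 1 + C0 * 2^(DIM('a)+1)"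
    unfolding Kconst_def using delta_consec[OF assms(3,4)] by simp
  hence "CBc * Kconst \<mu> n (Cube z (2^g)) (Cube z (2^h)) * aa g powr (-1/p) \<le> C7 * aa g powr (-1/p)"
    unfolding C7_def using CBc(1) by (intro mult_right_mono mult_left_mono) auto
  finally show ?thesis .
qed

definition "CC = (C6 + C7) / (1 - 2 powr (-1/p))"

lemma r_lt1: "2 powr (-1/p) < (1::real)"
  using ppos by (simp add: powr_less_one)

lemma CC_eq: "CC * (1 - 2 powr (-1/p)) = C6 + C7"
proof -
  have "1 - 2 powr (-1/p) \<noteq> 0" using r_lt1 by linarith
  thus ?thesis unfolding CC_def by (simp del: powr_minus_divide)
qed

lemma CC_nonneg: "0 \<le> CC"
  unfolding CC_def using r_lt1 C6_nonneg C7_nonneg ppos by (intro divide_nonneg_nonneg) auto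

lemma CC_ge: "C6 + C7 \<le> CC"
proof -
  have r0: "0 \<le> 2 powr (-1/p)" by simp
  have "C6 + C7 = CC * (1 - 2 powr (-1/p))" using CC_eq by simp
  also have "\<dots> \<le> CC * 1" using r0 CC_nonneg by (intro mult_left_mono) auto
  finally show ?thesis by simp
qed

lemma blockC: "DB e \<Longrightarrow> DB e' \<Longrightarrow> e \<le> e' \<Longrightarrow> \<bar>mm e - mm e'\<bar> \<le> CC * aa e powr (-1/p)"
proof (induction "e' - e" arbitrary: e e' rule: less_induct)
  case less
  show ?case
  proof (cases "aa e' \<le> 2 * aa e")
    case True
    have "\<bar>mm e - mm e'\<bar> \<le> C6 * aa e powr (-1/p)" by (rule stepA[OF less.prems True])
    also have "\<dots> \<le> CC * aa e powr (-1/p)" using CC_ge C7_nonneg by (intro mult_right_mono) auto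
    finally show ?thesis .
  next
    case False
    define h where "h = (LEAST x. DB x \<and> 2 * aa e < aa x)"
    have hP: "DB h \<and> 2 * aa e < aa h" unfolding h_def by (rule LeastI[of _ e']) (use less.prems False in auto)
    have he': "h \<le> e'" unfolding h_def by (rule Least_le) (use less.prems False in auto)
    have eh: "e < h"
    proof (rule ccontr)
      assume "\<not> e < h" hence "aa h \<le> aa e" by (intro aa_mono) auto
      thus False using hP aa_pos[of e] by simp
    qed
    define G where "G = {x. DB x \<and> x < h}"
    have finG: "finite G" unfolding G_def by (rule finite_subset[of _ "{..<h}"]) auto
    have eG: "e \<in> G" using less.prems eh by (simp add: G_def)
    define g where "g = Max G"
    have gG: "g \<in> G" unfolding g_def using finG eG by (intro Max_in) auto
    have eg: "e \<le> g" unfolding g_def using finG eG by simp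
    have gP: "DB g" "g < h" using gG by (auto simp: G_def)
    have ag: "aa g \<le> 2 * aa e"
    proof -
      have "\<not> (DB g \<and> 2 * aa e < aa g)" using not_less_Least[of g "\<lambda>x. DB x \<and> 2 * aa e < aa x"] gP h_def by blast
      thus ?thesis using gP by simp
    qed
    have btw: "\<forall>x. g < x \<and> x < h \<longrightarrow> \<not> DB x"
    proof (intro allI impI)
      fix x assume x: "g < x \<and> x < h"
      show "\<not> DB x"
      proof
        assume "DB x" hence "x \<in> G" using x by (simp add: G_def)
        hence "x \<le> g" unfolding g_def using finG by simp
        thus False using x by simp
      qed
    qed
    define r :: real where "r = aa e powr (-1/p)"
    have d1: "\<bar>mm e - mm g\<bar> \<le> C6 * r" unfolding r_def by (rule stepA[OF less.prems(1) gP(1) eg ag])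
    have "\<bar>mm g - mm h\<bar> \<le> C7 * aa g powr (-1/p)" by (rule stepB[OF gP(1) conjunct1[OF hP] gP(2) btw])
    also have "aa g powr (-1/p) \<le> r" unfolding r_def
      using ppos aa_pos[of e] aa_mono[OF eg] by (intro powr_mono2') auto
    hence "C7 * aa g powr (-1/p) \<le> C7 * r" using C7_nonneg by (intro mult_left_mono) auto
    finally have d2: "\<bar>mm g - mm h\<bar> \<le> C7 * r" .
    have c1: "\<bar>mm h - mm e'\<bar> \<le> CC * aa h powr (-1/p)"
      by (rule less.hyps) (use eh he' hP less.prems in auto)
    have "aa h powr (-1/p) \<le> (2 * aa e) powr (-1/p)"
      using ppos aa_pos[of e] hP by (intro powr_mono2') auto
    also have "(2 * aa e) powr (-1/p) = 2 powr (-1/p) * r" unfolding r_def by (simp add: powr_mult)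
    finally have "CC * aa h powr (-1/p) \<le> CC * (2 powr (-1/p) * r)"
      using CC_nonneg by (intro mult_left_mono) auto
    hence d3: "\<bar>mm h - mm e'\<bar> \<le> CC * (2 powr (-1/p) * r)" using c1 by linarith
    have "\<bar>mm e - mm e'\<bar> \<le> C6 * r + C7 * r + CC * (2 powr (-1/p) * r)" using d1 d2 d3 by linarith
    also have "\<dots> = (C6 + C7 + CC * 2 powr (-1/p)) * r" by (simp add: algebra_simps)
    also have "C6 + C7 + CC * 2 powr (-1/p) = CC" using CC_eq by (simp add: algebra_simps)
    finally show ?thesis by (simp add: r_def)
  qed
qed

definition "ek k = (LEAST e. DB e \<and> k \<le> e)"

lemma ek: "DB (ek k)" "k \<le> ek k"
proof -
  obtain e where "k \<le> e" "DB e" using E_unbounded by blast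
  hence "DB e \<and> k \<le> e" by simp
  hence "DB (ek k) \<and> k \<le> ek k" unfolding ek_def by (rule LeastI)
  thus "DB (ek k)" "k \<le> ek k" by auto
qed

lemma ek_mono: "k \<le> l \<Longrightarrow> ek k \<le> ek l"
  unfolding ek_def[of k] by (rule Least_le) (use ek[of l] in auto)

definition "CR = CBc * (1 + C0 * 2^(DIM('a)+1) * 2^(DIM('a)+1) * 2^(DIM('a)+1)) + CC"

lemma compR:
  assumes dR: "doubling \<mu> (Cube w L)" and sub: "cube z (2^(ek k)) \<subseteq> cube w L"
  shows "\<bar>mean \<mu> (Cube w L) f - mm (ek k)\<bar> \<le> CR * aa (ek k) powr (-1/p)"
proof -
  let ?e = "ek k"
  have zR: "z \<in> cube w L" using sub center_in_cube[of "2^?e" z] by auto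
  have L2: "(2::real)^?e \<le> L" by (rule cube_side_le[OF _ sub]) simp
  have L1: "1 \<le> L" using L2 one_le_power[of "2::real" "ek k"] by linarith
  obtain k' where k': "2*L \<le> real k'" using real_arch_simple by blast
  obtain e0 where e0: "k' \<le> e0" "DB e0" using E_unbounded by blast
  have "real k' < 2^k'"
  proof -
    have "k' < 2^k'" by (rule less_exp)
    hence "real k' < real (2^k')" by (simp only: of_nat_less_iff)
    thus ?thesis by simp
  qed
  moreover have "(2::real)^k' \<le> 2^e0" using e0 by (intro power_increasing) auto
  ultimately have e0L: "2*L \<le> 2^e0" using k' by linarith
  define h where "h = (LEAST e. DB e \<and> 2*L \<le> 2^e)"
  have hP: "DB h \<and> 2*L \<le> 2^h" unfolding h_def by (rule LeastI[of _ e0]) (use e0 e0L in auto)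
  have ndb: "\<forall>e. e < h \<and> 2*L < 2^e \<longrightarrow> \<not> DB e"
  proof (intro allI impI)
    fix e assume "e < h \<and> 2*L < 2^e"
    thus "\<not> DB e" using not_less_Least[of e "\<lambda>e. DB e \<and> 2*L \<le> 2^e"] h_def by auto
  qed
  have dl: "delta \<mu> n (Cube w L) (Cube z (2^h)) \<le> C0 * 2^(DIM('a)+1) * 2^(DIM('a)+1) * 2^(DIM('a)+1)"
    using delta_R[OF zR L1 conjunct2[OF hP] ndb] .
  have Rh: "cube w L \<subseteq> cube z (2^h)"
    using cube_shift2[OF zR, of L] cube_mono[of "2*L" "2^h" z] hP by auto
  have eh: "?e \<le> h"
  proof -
    have "(2::real)^?e < 2^h" using L2 L1 hP by linarith
    thus ?thesis by (simp add: power_strict_increasing_iff)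
  qed
  have mR: "aa ?e \<le> measure \<mu> (cube w L)" by (rule measure_mono_cube2[OF sub])
  have b1: "\<bar>mean \<mu> (Cube w L) f - mm h\<bar> \<le> CBc * Kconst \<mu> n (Cube w L) (Cube z (2^h)) * measure \<mu> (cube w L) powr (-1/p)"
    by (rule CBc(2)[OF dR conjunct1[OF hP] Rh])
  have "measure \<mu> (cube w L) powr (-1/p) \<le> aa ?e powr (-1/p)"
    using ppos aa_pos[of ?e] mR by (intro powr_mono2') auto
  moreover have "Kconst \<mu> n (Cube w L) (Cube z (2^h)) \<le> 1 + C0 * 2^(DIM('a)+1) * 2^(DIM('a)+1) * 2^(DIM('a)+1)"
    using dl by (simp add: Kconst_def)
  moreover have "0 \<le> Kconst \<mu> n (Cube w L) (Cube z (2^h))" using K_ge1[of "Cube w L" "Cube z (2^h)"] by linarith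
  ultimately have b2: "CBc * Kconst \<mu> n (Cube w L) (Cube z (2^h)) * measure \<mu> (cube w L) powr (-1/p)
      \<le> CBc * (1 + C0 * 2^(DIM('a)+1) * 2^(DIM('a)+1) * 2^(DIM('a)+1)) * aa ?e powr (-1/p)"
    using CBc(1) by (intro mult_mono mult_left_mono) auto
  have b3: "\<bar>mm ?e - mm h\<bar> \<le> CC * aa ?e powr (-1/p)" by (rule blockC[OF ek(1) conjunct1[OF hP] eh])
  have "\<bar>mean \<mu> (Cube w L) f - mm ?e\<bar> \<le> \<bar>mean \<mu> (Cube w L) f - mm h\<bar> + \<bar>mm ?e - mm h\<bar>" by linarith
  also have "\<dots> \<le> CR * aa ?e powr (-1/p)"
  proof -
    have "CR * aa ?e powr (-1/p) = CBc * (1 + C0 * 2^(DIM('a)+1) * 2^(DIM('a)+1) * 2^(DIM('a)+1)) * aa ?e powr (-1/p) + CC * aa ?e powr (-1/p)"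
      unfolding CR_def by (rule distrib_right)
    thus ?thesis using b1 b2 b3 by linarith
  qed
  finally show ?thesis .
qed

lemma chain_bound: "k \<le> l \<Longrightarrow> \<bar>mm (ek k) - mm (ek l)\<bar> \<le> CC * aa (ek k) powr (-1/p)"
  by (rule blockC[OF ek(1) ek(1) ek_mono])
end

lemma seq_props:
  assumes z: "z \<in> supp \<mu>"
  shows "\<forall>k. 0 < (2::real)^(ek z k) \<and> Cube z (2^(ek z k)) \<in> cubesQ2 \<mu>
                    \<and> cube z (2^(ek z k)) \<subseteq> cube z (2^(ek z (Suc k)))"
    and "(\<Union>k. cube z ((2::real)^(ek z k))) = UNIV"
proof -
  show "\<forall>k. 0 < (2::real)^(ek z k) \<and> Cube z (2^(ek z k)) \<in> cubesQ2 \<mu>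
                    \<and> cube z (2^(ek z k)) \<subseteq> cube z (2^(ek z (Suc k)))"
    using ek[OF z] ek_mono[OF z] by (auto simp: cubesQ2_def intro!: cube_mono power_increasing)
  show "(\<Union>k. cube z ((2::real)^(ek z k))) = UNIV"
  proof (rule cube_UNIV)
    fix k
    have "k < 2^k" by (rule less_exp)
    hence "real k < real (2^k)" by (simp only: of_nat_less_iff)
    hence "real k < 2^k" by simp
    also have "(2::real)^k \<le> 2^(ek z k)" using ek(2)[OF z] by (intro power_increasing) auto
    finally show "real k \<le> 2^(ek z k)" by simp
  qed
qed

lemma CR_nonneg: "z \<in> supp \<mu> \<Longrightarrow> 0 \<le> CR"
  unfolding CR_def using CBc(1) C0 CC_nonneg by simp

lemma inf_small:
  assumes z: "z \<in> supp \<mu>" and inf: "emeasure \<mu> UNIV = \<infinity>" and eps: "0 < \<epsilon>"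
  shows "\<exists>k0. \<forall>k\<ge>k0. measure \<mu> (cube z (2^(ek z k))) powr (-1/p) \<le> \<epsilon>"
proof -
  have "(\<lambda>k. emeasure \<mu> (cube z ((2::real)^k))) \<longlonglongrightarrow> emeasure \<mu> (\<Union>k. cube z ((2::real)^k))"
    by (intro Lim_emeasure_incseq) (auto simp: incseq_def intro!: cube_mono power_increasing)
  moreover have "(\<Union>k. cube z ((2::real)^k)) = UNIV"
  proof (rule cube_UNIV)
    fix k :: nat
    have "k < 2^k" by (rule less_exp)
    hence "real k < real (2^k)" by (simp only: of_nat_less_iff)
    thus "real k \<le> 2^k" by simp
  qed
  ultimately have lim: "(\<lambda>k. emeasure \<mu> (cube z ((2::real)^k))) \<longlonglongrightarrow> top" using inf by simp
  define Y where "Y = \<epsilon> powr (-p)"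
  have Y0: "0 < Y" using eps by (simp add: Y_def)
  have "\<forall>\<^sub>F k in sequentially. ennreal Y < emeasure \<mu> (cube z ((2::real)^k))"
    by (rule order_tendstoD(1)[OF lim]) simp
  then obtain k0 where k0: "\<And>k. k \<ge> k0 \<Longrightarrow> ennreal Y < emeasure \<mu> (cube z ((2::real)^k))"
    unfolding eventually_sequentially by blast
  show ?thesis
  proof (intro exI[of _ k0] allI impI)
    fix k assume k: "k0 \<le> k"
    have "ennreal Y < ennreal (measure \<mu> (cube z ((2::real)^k)))" using k0[OF k] by (simp add: cube_emeasure)
    hence "Y < measure \<mu> (cube z ((2::real)^k))" using Y0 by (simp add: ennreal_less_iff)
    also have "\<dots> \<le> measure \<mu> (cube z (2^(ek z k)))"
      using ek(2)[OF z, of k] by (intro measure_mono_cube2 cube_mono power_increasing) auto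
    finally have "measure \<mu> (cube z (2^(ek z k))) powr (-1/p) \<le> Y powr (-1/p)"
      using Y0 ppos[OF z] by (intro powr_mono2') auto
    also have "Y powr (-1/p) = \<epsilon>" using eps ppos[OF z] by (simp add: Y_def powr_powr)
    finally show "measure \<mu> (cube z (2^(ek z k))) powr (-1/p) \<le> \<epsilon>" .
  qed
qed

lemma inf_case:
  assumes z: "z \<in> supp \<mu>" and inf: "emeasure \<mu> UNIV = \<infinity>"
  shows "(\<exists>M. \<forall>\<epsilon>>0. \<exists>Q\<in>cubesQ2 \<mu>. \<forall>R\<in>cubesQ2 \<mu>.
            cset Q \<subseteq> cset R \<longrightarrow> \<bar>mean \<mu> R f - M\<bar> \<le> \<epsilon>)
       \<and> Cauchy (\<lambda>k. mean \<mu> (Cube z (2^(ek z k))) f)"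
proof -
  define X where "X k = mean \<mu> (Cube z (2^(ek z k))) f" for k
  define r where "r k = measure \<mu> (cube z (2^(ek z k))) powr (-1/p)" for k
  have cb: "\<And>k l. k \<le> l \<Longrightarrow> \<bar>X k - X l\<bar> \<le> CC * r k"
    unfolding X_def r_def by (rule chain_bound[OF z])
  have CC0: "0 \<le> CC" by (rule CC_nonneg[OF z])
  have r0: "0 \<le> r k" for k by (simp add: r_def)
  have CRn: "0 \<le> CR" by (rule CR_nonneg[OF z])
  have small: "\<exists>k0. \<forall>k\<ge>k0. r k \<le> \<eta>" if "0 < \<eta>" for \<eta>
    unfolding r_def using inf_small[OF z inf that] .
  have cauchy: "Cauchy X"
  proof (rule CauchyI)
    fix e :: real assume e: "0 < e"
    define \<eta> where "\<eta> = e / (2*CC+2)"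
    have \<eta>0: "0 < \<eta>" using e CC0 by (simp add: \<eta>_def)
    obtain k0 where k0: "\<forall>k\<ge>k0. r k \<le> \<eta>" using small[OF \<eta>0] by blast
    have key: "CC * r k0 * 2 < e"
    proof -
      have "CC * r k0 \<le> CC * \<eta>" using k0 CC0 by (intro mult_left_mono) auto
      moreover have "CC * \<eta> * 2 < e" using e CC0 by (simp add: \<eta>_def field_simps)
      ultimately show ?thesis by linarith
    qed
    show "\<exists>M. \<forall>m\<ge>M. \<forall>n\<ge>M. norm (X m - X n) < e"
    proof (intro exI[of _ k0] allI impI)
      fix m n assume "k0 \<le> m" "k0 \<le> n"
      hence "\<bar>X k0 - X m\<bar> \<le> CC * r k0" "\<bar>X k0 - X n\<bar> \<le> CC * r k0" using cb by auto
      thus "norm (X m - X n) < e" using key by simp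
    qed
  qed
  hence lim: "X \<longlonglongrightarrow> lim X" by (simp add: Cauchy_convergent_iff convergent_LIMSEQ_iff)
  have limb: "\<bar>X k - lim X\<bar> \<le> CC * r k" for k
  proof (rule LIMSEQ_le_const2)
    show "(\<lambda>l. \<bar>X k - X l\<bar>) \<longlonglongrightarrow> \<bar>X k - lim X\<bar>" by (intro tendsto_intros lim)
    show "\<exists>N. \<forall>l\<ge>N. \<bar>X k - X l\<bar> \<le> CC * r k" using cb by blast
  qed
  have part1: "\<forall>\<epsilon>>0. \<exists>Q\<in>cubesQ2 \<mu>. \<forall>R\<in>cubesQ2 \<mu>.
            cset Q \<subseteq> cset R \<longrightarrow> \<bar>mean \<mu> R f - lim X\<bar> \<le> \<epsilon>"
  proof (intro allI impI)
    fix \<epsilon> :: real assume eps: "0 < \<epsilon>"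
    define \<eta> where "\<eta> = \<epsilon> / (CR + CC + 1)"
    have \<eta>0: "0 < \<eta>" using eps CC0 CRn by (simp add: \<eta>_def)
    obtain k0 where k0: "\<forall>k\<ge>k0. r k \<le> \<eta>" using small[OF \<eta>0] by blast
    have rk: "r k0 \<le> \<eta>" using k0 by simp
    have Q: "Cube z (2^(ek z k0)) \<in> cubesQ2 \<mu>" using seq_props(1)[OF z] by blast
    show "\<exists>Q\<in>cubesQ2 \<mu>. \<forall>R\<in>cubesQ2 \<mu>. cset Q \<subseteq> cset R \<longrightarrow> \<bar>mean \<mu> R f - lim X\<bar> \<le> \<epsilon>"
    proof (intro bexI[OF _ Q] ballI impI)
      fix R assume R: "R \<in> cubesQ2 \<mu>" and sub: "cset (Cube z (2^(ek z k0))) \<subseteq> cset R"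
      show "\<bar>mean \<mu> R f - lim X\<bar> \<le> \<epsilon>"
      proof (cases R)
        case Whole
        hence "Whole \<in> cubesQ \<mu>" using R by (simp add: cubesQ2_def doubling_def)
        hence "emeasure \<mu> UNIV < \<infinity>" by (simp add: cubesQ_def)
        thus ?thesis using inf by simp
      next
        case (Cube w L)
        have dR: "doubling \<mu> (Cube w L)" using R Cube by (simp add: cubesQ2_def)
        have "\<bar>mean \<mu> R f - X k0\<bar> \<le> CR * r k0"
          unfolding Cube X_def r_def by (rule compR[OF z dR]) (use sub Cube in simp)
        moreover have "\<bar>X k0 - lim X\<bar> \<le> CC * r k0" by (rule limb)
        ultimately have "\<bar>mean \<mu> R f - lim X\<bar> \<le> (CR + CC) * r k0" by (simp add: algebra_simps)
        also have "\<dots> \<le> (CR + CC) * \<eta>" using rk CRn CC0 by (intro mult_left_mono) auto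
        also have "\<dots> \<le> \<epsilon>" using eps CRn CC0 by (simp add: \<eta>_def field_simps)
        finally show ?thesis .
      qed
    qed
  qed
  show ?thesis using part1 cauchy unfolding X_def by blast
qed

lemma fin_case:
  assumes z: "z \<in> supp \<mu>" and fin: "emeasure \<mu> UNIV < \<infinity>"
  shows "(\<exists>M. \<forall>\<epsilon>>0. \<exists>Q\<in>cubesQ2 \<mu>. \<forall>R\<in>cubesQ2 \<mu>.
            cset Q \<subseteq> cset R \<longrightarrow> \<bar>mean \<mu> R f - M\<bar> \<le> \<epsilon>)
       \<and> Cauchy (\<lambda>k. mean \<mu> (Cube z (2^(ek z k))) f)"
proof -
  have WQ: "Whole \<in> cubesQ \<mu>" using fin by (simp add: cubesQ_def)
  have mU0: "0 \<le> measure \<mu> UNIV" by simp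
  have WQ2: "Whole \<in> cubesQ2 \<mu>"
  proof -
    have "1 * measure \<mu> UNIV \<le> 2 ^ (DIM('a) + 1) * measure \<mu> UNIV"
      using mU0 by (intro mult_right_mono) (auto simp del: power_Suc simp: one_le_power)
    thus ?thesis using WQ by (simp add: cubesQ2_def doubling_def)
  qed
  have part1: "\<forall>\<epsilon>>0. \<exists>Q\<in>cubesQ2 \<mu>. \<forall>R\<in>cubesQ2 \<mu>.
            cset Q \<subseteq> cset R \<longrightarrow> \<bar>mean \<mu> R f - mean \<mu> Whole f\<bar> \<le> \<epsilon>"
  proof (intro allI impI bexI[OF _ WQ2] ballI)
    fix \<epsilon> :: real and R :: "'a cubeQ" assume eps: "0 < \<epsilon>" and sub: "cset Whole \<subseteq> cset R"
    show "\<bar>mean \<mu> R f - mean \<mu> Whole f\<bar> \<le> \<epsilon>"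
    proof (cases R)
      case (Cube w L)
      thus ?thesis using sub cube_ne_UNIV[of w L] by auto
    qed (use eps in simp)
  qed
  have spU: "space \<mu> = UNIV" using sets_eq_imp_space_eq[OF sets_mu] by simp
  interpret fm: finite_measure \<mu> using fin spU by (intro finite_measureI) simp
  obtain B where "\<forall>Q\<in>cubesQ \<mu>.
        set_integrable \<mu> (cset Q) (\<lambda>x. \<bar>f x - mean \<mu> (star \<mu> Q) f\<bar> powr q) \<and>
        measure \<mu> (cset (dil 2 Q)) powr (1/p - 1/q) *
          (LINT x:cset Q|\<mu>. \<bar>f x - mean \<mu> (star \<mu> Q) f\<bar> powr q) powr (1/q) \<le> B"
    using first_cond by blast
  hence "set_integrable \<mu> UNIV (\<lambda>x. \<bar>f x - mean \<mu> (star \<mu> Whole) f\<bar> powr q)" using WQ by auto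
  then obtain c where ic: "integrable \<mu> (\<lambda>x. \<bar>f x - c\<bar> powr q)"
    by (auto simp: set_integrable_def)
  have iF: "integrable \<mu> f"
  proof (rule Bochner_Integration.integrable_bound)
    show "integrable \<mu> (\<lambda>x. 1 + \<bar>c\<bar> + \<bar>f x - c\<bar> powr q)"
      using ic by (intro Bochner_Integration.integrable_add fm.integrable_const)
    show "f \<in> borel_measurable \<mu>" by (rule f_meas)
    show "AE x in \<mu>. norm (f x) \<le> norm (1 + \<bar>c\<bar> + \<bar>f x - c\<bar> powr q)"
    proof (intro AE_I2)
      fix x
      have "\<bar>f x - c\<bar> \<le> 1 + 1 powr (1-q) * \<bar>f x - c\<bar> powr q"
        using q1 by (intro young_pt) auto
      hence "\<bar>f x\<bar> \<le> 1 + \<bar>c\<bar> + \<bar>f x - c\<bar> powr q" by simp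
      thus "norm (f x) \<le> norm (1 + \<bar>c\<bar> + \<bar>f x - c\<bar> powr q)" by simp
    qed
  qed
  define A where "A k = cube z ((2::real)^(ek z k))" for k
  have incA: "incseq A" unfolding A_def incseq_def
    using ek_mono[OF z] by (auto intro!: cube_mono power_increasing)
  have UA: "(\<Union>k. A k) = UNIV" unfolding A_def by (rule seq_props(2)[OF z])
  have l1: "(\<lambda>k. LINT x:A k|\<mu>. f x) \<longlonglongrightarrow> (LINT x:(\<Union>k. A k)|\<mu>. f x)"
    using iF seq_props(2)[OF z] by (intro set_integral_cont_up incA) (auto simp: A_def set_integrable_def)
  have l2: "(\<lambda>k. measure \<mu> (A k)) \<longlonglongrightarrow> measure \<mu> (\<Union>k. A k)"
    using fin seq_props(2)[OF z] by (intro Lim_measure_incseq incA) (auto simp: A_def)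
  have mpos: "measure \<mu> UNIV \<noteq> 0"
  proof
    assume "measure \<mu> UNIV = 0"
    hence "emeasure \<mu> UNIV = 0" using fin by (simp add: emeasure_eq_ennreal_measure)
    thus False using pos by simp
  qed
  have "(\<lambda>k. (LINT x:A k|\<mu>. f x) / measure \<mu> (A k)) \<longlonglongrightarrow> (LINT x:(\<Union>k. A k)|\<mu>. f x) / measure \<mu> (\<Union>k. A k)"
    using mpos UA by (intro tendsto_divide l1 l2) auto
  hence "Cauchy (\<lambda>k. (LINT x:A k|\<mu>. f x) / measure \<mu> (A k))" by (rule LIMSEQ_imp_Cauchy)
  hence "Cauchy (\<lambda>k. mean \<mu> (Cube z (2^(ek z k))) f)" by (simp add: A_def mean_Cube)
  thus ?thesis using part1 by blast
qed

lemma main: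
  "(\<exists>M. \<forall>\<epsilon>>0. \<exists>Q\<in>cubesQ2 \<mu>. \<forall>R\<in>cubesQ2 \<mu>.
            cset Q \<subseteq> cset R \<longrightarrow> \<bar>mean \<mu> R f - M\<bar> \<le> \<epsilon>)
       \<and> (\<exists>z s. (\<forall>k. 0 < s k \<and> Cube z (s k) \<in> cubesQ2 \<mu>
                    \<and> cube z (s k) \<subseteq> cube z (s (Suc k)))
              \<and> Cauchy (\<lambda>k. mean \<mu> (Cube z (s k)) f)
              \<and> (\<Union>k. cube z (s k)) = UNIV)"
proof -
  obtain z where z: "z \<in> supp \<mu>" using supp_ne by blast
  have both: "(\<exists>M. \<forall>\<epsilon>>0. \<exists>Q\<in>cubesQ2 \<mu>. \<forall>R\<in>cubesQ2 \<mu>.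
            cset Q \<subseteq> cset R \<longrightarrow> \<bar>mean \<mu> R f - M\<bar> \<le> \<epsilon>)
       \<and> Cauchy (\<lambda>k. mean \<mu> (Cube z (2^(ek z k))) f)"
  proof (cases "emeasure \<mu> UNIV = \<infinity>")
    case True thus ?thesis by (rule inf_case[OF z])
  next
    case False thus ?thesis using fin_case[OF z] by (simp add: less_top)
  qed
  show ?thesis
    using both seq_props[OF z] by (intro conjI exI[of _ z] exI[of _ "\<lambda>k. (2::real)^(ek z k)"]) auto
qed
end


theorem proposition1:
  fixes \<mu> :: "'a::euclidean_space measure" and C0 n p q :: real and f :: "'a \<Rightarrow> real"
  assumes "radon_measure \<mu>" and "emeasure \<mu> UNIV > 0"
    and "C0 > 0" and "0 < n" and "n \<le> DIM('a)"
    and "growth \<mu> C0 n"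
    and "1 \<le> q" and "q \<le> p"
    and "campanato \<mu> n p q f"
  shows "(\<exists>M. \<forall>\<epsilon>>0. \<exists>Q\<in>cubesQ2 \<mu>. \<forall>R\<in>cubesQ2 \<mu>.
            cset Q \<subseteq> cset R \<longrightarrow> \<bar>mean \<mu> R f - M\<bar> \<le> \<epsilon>)
       \<and> (\<exists>z s. (\<forall>k. 0 < s k \<and> Cube z (s k) \<in> cubesQ2 \<mu>
                    \<and> cube z (s k) \<subseteq> cube z (s (Suc k)))
              \<and> Cauchy (\<lambda>k. mean \<mu> (Cube z (s k)) f)
              \<and> (\<Union>k. cube z (s k)) = UNIV)"
proof -
  interpret campa \<mu> C0 n p q f using assms by unfold_locales
  show ?thesis by (rule main)
qed

end
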